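(* Let $A,\hat A^0,\tilde A\in\mathbb{R}^{d\times k}$ with columns $a_i,\hat a^0_i,\tilde a_i$, and let $\eta_0,\eta_1>0$, $r:=\eta_0\sqrt k/d$, $\tau:=\eta_1\sqrt{k/d}$. Suppose $\|A\|\le\tau$, $\|\hat A^0\|\le\tau$, and $\|\hat a^0_i-a_i\|\le r$ for all $i$. Let $\tilde A=UDV^\top$ be an SVD, $\hat D$ the diagonal matrix with $\hat D_{ii}=\min\{D_{ii},\tau\}$, $Q:=U\hat DV^\top$ with columns $Q_i$, and define $\hat A$ column-wise by $\hat a_i=Q_i$ if $\|Q_i-\hat a^0_i\|\le r$, and $\hat a_i=\hat a^0_i+r\frac{Q_i-\hat a^0_i}{\|Q_i-\hat a^0_i\|}$ otherwise. Then $\|\hat A-A\|_F\le 2\|\tilde A-A\|_F$, $\|\hat a_i-a_i\|\le 2r$ for all $i$, and $\|\hat A\|\le 3\tau$.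
   Context: $\|\cdot\|$ is the spectral norm and $\|\cdot\|_F$ the Frobenius norm. *)

theory Defs
  imports "HOL-Analysis.Analysis"
begin

definition spec_norm :: "real^'n^'m \<Rightarrow> real" where
  "spec_norm A = onorm (\<lambda>x. A *v x)"

definition frob_norm :: "real^'n^'m \<Rightarrow> real" where
  "frob_norm A = sqrt (\<Sum>i\<in>UNIV. \<Sum>j\<in>UNIV. (A $ i $ j)^2)"

definition mat_of_cols :: "('n::finite \<Rightarrow> real^'m) \<Rightarrow> real^'n^'m" where
  "mat_of_cols c = transpose (\<chi> j. c j)"

end

theory Submission imports Defs begin

lemma frob_eq_norm: "frob_norm M = norm M"
  unfolding frob_norm_def norm_vec_def L2_set_def
  by (simp add: sum_nonneg)

lemma norm_sq_rows: "(norm (x::real^'n^'m))^2 = (\<Sum>i\<in>UNIV. (norm (x$i))^2)"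
  unfolding norm_vec_def L2_set_def by (simp add: sum_nonneg)

lemma norm_transpose: "norm (transpose (M::real^'n^'m)) = norm M"
proof -
  have "norm (transpose M) = frob_norm (transpose M)" by (simp add: frob_eq_norm)
  also have "\<dots> = frob_norm M" unfolding frob_norm_def transpose_def
    by (simp, subst sum.swap, simp)
  finally show ?thesis by (simp add: frob_eq_norm)
qed

lemma norm_sq_cols: "(norm (M::real^'n^'m))^2 = (\<Sum>j\<in>UNIV. (norm (column j M))^2)"
proof -
  have "(norm M)^2 = (norm (transpose M))^2" by (simp add: norm_transpose)
  also have "\<dots> = (\<Sum>j\<in>UNIV. (norm (transpose M $ j))^2)" by (rule norm_sq_rows)
  also have "\<dots> = (\<Sum>j\<in>UNIV. (norm (column j M))^2)"
    by (simp add: transpose_def column_def)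
  finally show ?thesis .
qed

lemma column_mult: "column j (A ** B) = A *v column j (B::real^'p^'n)"
  by (simp add: vec_eq_iff matrix_matrix_mult_def matrix_vector_mult_def column_def)

lemma orth_norm:
  fixes U :: "real^'r^'d"
  assumes "transpose U ** U = mat 1"
  shows "norm (U *v y) = norm y"
proof -
  have "inner (U *v y) (U *v y) = inner ((U *v y) v* U) y" by (simp add: dot_lmul_matrix)
  also have "(U *v y) v* U = transpose U *v (U *v y)" by simp
  also have "\<dots> = y" by (simp add: matrix_vector_mul_assoc assms)
  finally have "(norm (U *v y))^2 = (norm y)^2" by (simp add: power2_norm_eq_inner)
  thus ?thesis by (simp add: power2_eq_iff_nonneg)
qed

lemma orth_contr:
  fixes U :: "real^'r^'d"
  assumes "transpose U ** U = mat 1"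
  shows "norm (transpose U *v x) \<le> norm x"
proof -
  define y where "y = transpose U *v x"
  have "inner y y = inner (x v* U) y" by (simp add: y_def)
  also have "\<dots> = inner x (U *v y)" by (simp add: dot_lmul_matrix)
  also have "\<dots> \<le> norm x * norm (U *v y)" by (rule norm_cauchy_schwarz)
  also have "\<dots> = norm x * norm y" by (simp add: orth_norm assms)
  finally have "norm y * norm y \<le> norm x * norm y" by (simp add: norm_eq_sqrt_inner)
  hence "norm y \<le> norm x"
    by (cases "norm y = 0") (auto simp: mult_le_cancel_right)
  thus ?thesis by (simp add: y_def)
qed

lemma orth_mat_norm:
  fixes U :: "real^'r^'d" and M :: "real^'n^'r"
  assumes "transpose U ** U = mat 1"
  shows "norm (U ** M) = norm M"
proof -
  have "(norm (U ** M))^2 = (norm M)^2"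
    by (simp add: norm_sq_cols column_mult orth_norm assms)
  thus ?thesis by (simp add: power2_eq_iff_nonneg)
qed

lemma orth_mat_contr:
  fixes U :: "real^'r^'d" and M :: "real^'n^'d"
  assumes "transpose U ** U = mat 1"
  shows "norm (transpose U ** M) \<le> norm M"
proof -
  have "(norm (transpose U ** M))^2 \<le> (norm M)^2"
    unfolding norm_sq_cols column_mult
    by (rule sum_mono, rule power_mono, rule orth_contr[OF assms], simp)
  thus ?thesis by (simp add: power2_le_iff_abs_le)
qed

lemma orth_mat_norm_r:
  fixes V :: "real^'r^'k" and M :: "real^'r^'d"
  assumes "transpose V ** V = mat 1"
  shows "norm (M ** transpose V) = norm M"
  by (metis assms matrix_transpose_mul norm_transpose orth_mat_norm transpose_transpose)

lemma orth_mat_contr_r: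
  fixes V :: "real^'r^'k" and M :: "real^'k^'d"
  assumes "transpose V ** V = mat 1"
  shows "norm (M ** V) \<le> norm M"
  by (metis assms matrix_transpose_mul norm_transpose orth_mat_contr)

lemma mat_sub_ldistrib: "(A::real^'n^'m) ** (B - C) = A ** B - A ** C"
  by (simp add: vec_eq_iff matrix_matrix_mult_def sum_subtractf algebra_simps)

lemma mat_sub_rdistrib: "((B::real^'n^'m) - C) ** A = B ** A - C ** A"
  by (simp add: vec_eq_iff matrix_matrix_mult_def sum_subtractf algebra_simps)

lemma unit_col:
  fixes U :: "real^'r^'d"
  assumes "transpose U ** U = mat 1"
  shows "norm (column i U) = 1"
proof -
  have "inner (column i U) (column i U) = 1"
    using arg_cong[OF assms, of "\<lambda>M. M$i$i"] by (simp add: matrix_mult_transpose_dot_column mat_def)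
  thus ?thesis by (simp add: norm_eq_sqrt_inner)
qed

lemma spec_bound: "norm ((A::real^'n^'m) *v x) \<le> spec_norm A * norm x"
  unfolding spec_norm_def by (rule onorm) simp

lemma spec_le: "(\<And>x. norm ((A::real^'n^'m) *v x) \<le> b * norm x) \<Longrightarrow> spec_norm A \<le> b"
  unfolding spec_norm_def by (rule onorm_le)

lemma ball_proj:
  fixes x c a :: "real^'n"
  assumes "norm (x - c) > r" "r \<ge> 0" "norm (a - c) \<le> r"
  shows "norm (c + (r / norm (x - c)) *\<^sub>R (x - c) - a) \<le> norm (x - a)"
proof -
  define e where "e = x - c"
  define w where "w = a - c"
  define L where "L = norm e"
  have L: "L > r" using assms by (simp add: L_def e_def)
  have ew: "inner e w \<le> L * r"
    using norm_cauchy_schwarz[of e w] mult_left_mono[OF assms(3), of "norm e"] by (simp add: L_def w_def)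
  have "x - a = e - w" by (simp add: e_def w_def)
  have p: "c + (r / L) *\<^sub>R e - a = (r/L) *\<^sub>R e - w" by (simp add: w_def)
  have n1: "(norm (e - w))^2 = L^2 - 2 * inner e w + (norm w)^2"
    by (simp add: power2_norm_eq_inner inner_diff algebra_simps L_def inner_commute)
  have n2: "(norm ((r/L) *\<^sub>R e - w))^2 = r^2 - 2 * (r/L) * inner e w + (norm w)^2"
  proof -
    have Lp: "L > 0" using L assms(2) by linarith
    have "(norm ((r/L) *\<^sub>R e - w))^2 = (r/L)^2 * L^2 - 2 * (r/L) * inner e w + (norm w)^2"
    proof -
      show ?thesis
        unfolding power2_norm_eq_inner L_def
        apply (simp only: inner_diff_left inner_diff_right inner_scaleR_left inner_scaleR_right)
        apply (simp add: inner_commute algebra_simps power2_eq_square)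
        done
    qed
    also have "(r/L)^2 * L^2 = r^2" using Lp by (simp add: field_simps)
    finally show ?thesis .
  qed
  have "L^2 - 2 * inner e w \<ge> r^2 - 2 * (r/L) * inner e w"
  proof -
    have Lp: "L > 0" using L assms(2) by linarith
    have eq1: "(L^2 - 2 * inner e w) - (r^2 - 2 * (r/L) * inner e w) = (L - r) * (L + r) - 2 * (1 - r/L) * inner e w"
      by (simp add: algebra_simps power2_eq_square)
    have "2 * (1 - r/L) * inner e w \<le> 2 * (1 - r/L) * (L * r)"
      using ew L Lp by (intro mult_left_mono) (auto simp: field_simps)
    hence "(L - r) * (L + r) - 2 * (1 - r/L) * inner e w \<ge> (L - r) * (L + r) - 2 * (1 - r/L) * (L * r)" by linarith
    moreover have "(L - r) * (L + r) - 2 * (1 - r/L) * (L * r) = (L - r)^2"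
      using Lp by (simp add: field_simps power2_eq_square)
    ultimately show ?thesis by (smt (verit) zero_le_power2 eq1)
  qed
  hence "(norm ((r/L) *\<^sub>R e - w))^2 \<le> (norm (e - w))^2" using n1 n2 by linarith
  hence "norm ((r/L) *\<^sub>R e - w) \<le> norm (e - w)" by (simp add: power2_le_iff_abs_le)
  thus ?thesis using p \<open>x - a = e - w\<close> unfolding L_def e_def by metis
qed


lemma column_diff: "column j (X - Y) = column j X - column j (Y::real^'n^'m)"
  by (simp add: column_def vec_eq_iff)

theorem mainTheorem10:
  fixes A A0 At :: "real^'k^'d"
    and U :: "real^'r^'d" and D :: "real^'r^'r" and V :: "real^'r^'k"
    and eta0 eta1 :: real
  defines "r \<equiv> eta0 * sqrt (real CARD('k)) / real CARD('d)"
    and "tau \<equiv> eta1 * sqrt (real CARD('k) / real CARD('d))"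
  defines "Q \<equiv> U ** (\<chi> i j. if i = j then min (D $ i $ j) tau else 0) ** transpose V"
  defines "Ahat \<equiv> mat_of_cols (\<lambda>i.
              if norm (column i Q - column i A0) \<le> r then column i Q
              else column i A0 + (r / norm (column i Q - column i A0)) *\<^sub>R (column i Q - column i A0))"
  assumes "eta0 > 0" and "eta1 > 0"
    and "spec_norm A \<le> tau" and "spec_norm A0 \<le> tau"
    and "\<forall>i. norm (column i A0 - column i A) \<le> r"
    and "transpose U ** U = mat 1" and "transpose V ** V = mat 1"
    and "\<forall>i j. i \<noteq> j \<longrightarrow> D $ i $ j = 0" and "\<forall>i. 0 \<le> D $ i $ i"
    and "At = U ** D ** transpose V"
  shows "frob_norm (Ahat - A) \<le> 2 * frob_norm (At - A)
       \<and> (\<forall>i. norm (column i Ahat - column i A) \<le> 2 * r)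
       \<and> spec_norm Ahat \<le> 3 * tau"
proof -
  note UU = assms(10) and VV = assms(11)
  have r0: "r > 0" unfolding r_def using assms(5) by simp
  have tau0: "tau \<ge> 0" unfolding tau_def using assms(6) by simp
  define Dh :: "real^'r^'r" where "Dh = (\<chi> i j. if i = j then min (D $ i $ j) tau else 0)"
  have Qdef: "Q = U ** Dh ** transpose V" by (simp add: Q_def Dh_def)
  define c where "c = (\<lambda>i. if norm (column i Q - column i A0) \<le> r then column i Q
              else column i A0 + (r / norm (column i Q - column i A0)) *\<^sub>R (column i Q - column i A0))"
  have colA: "column i Ahat = c i" for i
  proof -
    have "Ahat = mat_of_cols c" unfolding Ahat_def c_def ..
    thus ?thesis by (simp add: mat_of_cols_def column_def transpose_def)
  qed
  have cA0: "norm (c i - column i A0) \<le> r" for i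
  proof (cases "norm (column i Q - column i A0) \<le> r")
    case True thus ?thesis by (simp add: c_def)
  next
    case False
    hence "norm (column i Q - column i A0) > 0" using r0 by linarith
    thus ?thesis using False r0 by (simp add: c_def)
  qed
  have cA: "norm (c i - column i A) \<le> norm (column i Q - column i A)" for i
  proof (cases "norm (column i Q - column i A0) \<le> r")
    case True thus ?thesis by (simp add: c_def)
  next
    case F2: False
    have "norm (column i A - column i A0) \<le> r" using assms(9) by (simp add: norm_minus_commute)
    hence "norm (column i A0 + (r / norm (column i Q - column i A0)) *\<^sub>R (column i Q - column i A0) - column i A)
        \<le> norm (column i Q - column i A)"
      using ball_proj[of r "column i Q" "column i A0" "column i A"] F2 r0 by simp
    thus ?thesis using F2 by (simp add: c_def)
  qed
  have part2: "\<forall>i. norm (column i Ahat - column i A) \<le> 2 * r"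
  proof
    fix i
    have "norm (c i - column i A) \<le> norm (c i - column i A0) + norm (column i A0 - column i A)"
      using norm_triangle_ineq[of "c i - column i A0" "column i A0 - column i A"] by simp
    thus "norm (column i Ahat - column i A) \<le> 2 * r" unfolding colA using cA0[of i] assms(9)[rule_format, of i] by linarith
  qed
  define C where "C = transpose U ** A ** V"
  have UDV: "transpose U ** At ** V = D"
  proof -
    have "transpose U ** At ** V = (transpose U ** U) ** D ** (transpose V ** V)"
      by (simp add: assms(14) matrix_mul_assoc)
    thus ?thesis by (simp add: UU VV)
  qed
  have DC: "D - C = transpose U ** (At - A) ** V"
    by (simp add: C_def UDV[symmetric] mat_sub_ldistrib mat_sub_rdistrib)
  have QAt: "Q - At = U ** (Dh - D) ** transpose V"
    by (simp add: Qdef assms(14) mat_sub_ldistrib mat_sub_rdistrib)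
  have Cii: "C $ i $ i \<le> tau" for i
  proof -
    have "C $ i $ i = column i C $ i" by (simp add: column_def)
    also have "column i C = transpose U *v (A *v column i V)"
      by (simp add: C_def column_mult matrix_vector_mul_assoc)
    also have "(transpose U *v (A *v column i V)) $ i = inner (column i U) (A *v column i V)"
      by (simp add: matrix_vector_mul_component transpose_def column_def)
    also have "\<dots> \<le> norm (column i U) * norm (A *v column i V)" by (rule norm_cauchy_schwarz)
    also have "\<dots> \<le> spec_norm A * norm (column i V)" using spec_bound[of A "column i V"] unit_col[OF UU] by simp
    also have "\<dots> \<le> tau" using unit_col[OF VV] assms(7) by simp
    finally show ?thesis .
  qed
  have DhD: "norm (Dh - D) \<le> norm (D - C)"
  proof (rule norm_le_componentwise_cart)
    fix i show "norm ((Dh - D) $ i) \<le> norm ((D - C) $ i)"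
    proof (rule norm_le_componentwise_cart)
      fix j show "norm ((Dh - D) $ i $ j) \<le> norm ((D - C) $ i $ j)"
        using Cii[of i] assms(12) by (auto simp: Dh_def)
    qed
  qed
  have "norm (Q - At) \<le> norm (At - A)"
  proof -
    have "norm (Q - At) = norm (Dh - D)" unfolding QAt
      by (simp add: orth_mat_norm_r[OF VV] orth_mat_norm[OF UU])
    also have "\<dots> \<le> norm (D - C)" by (rule DhD)
    also have "\<dots> \<le> norm ((At - A) ** V)" unfolding DC
      by (simp add: matrix_mul_assoc[symmetric] orth_mat_contr[OF UU])
    also have "\<dots> \<le> norm (At - A)" by (rule orth_mat_contr_r[OF VV])
    finally show ?thesis .
  qed
  have "norm (Ahat - A) \<le> norm (Q - A)"
  proof -
    have "(norm (Ahat - A))^2 \<le> (norm (Q - A))^2"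
      unfolding norm_sq_cols
      by (rule sum_mono, rule power_mono) (use cA colA in \<open>auto simp: column_diff\<close>)
    thus ?thesis by (simp add: power2_le_iff_abs_le)
  qed
  also have "norm (Q - A) \<le> norm (Q - At) + norm (At - A)"
    using norm_triangle_ineq[of "Q - At" "At - A"] by simp
  finally have part1: "frob_norm (Ahat - A) \<le> 2 * frob_norm (At - A)"
    using \<open>norm (Q - At) \<le> norm (At - A)\<close> by (simp add: frob_eq_norm)
  have Qspec: "norm (Q *v x) \<le> tau * norm x" for x
  proof -
    define y where "y = transpose V *v x"
    have "Q *v x = U *v (Dh *v y)" by (simp only: Qdef y_def matrix_vector_mul_assoc matrix_mul_assoc)
    hence "norm (Q *v x) = norm (Dh *v y)" by (simp add: orth_norm[OF UU])
    also have "\<dots> \<le> norm (tau *\<^sub>R y)"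
    proof (rule norm_le_componentwise_cart)
      fix i
      have "(Dh *v y) $ i = min (D $ i $ i) tau * y $ i"
        by (simp add: Dh_def matrix_vector_mult_def if_distrib if_distribR cong: if_cong)
      thus "norm ((Dh *v y) $ i) \<le> norm ((tau *\<^sub>R y) $ i)"
        using tau0 assms(13) by (auto simp: abs_mult intro!: mult_right_mono)
    qed
    also have "\<dots> \<le> tau * norm x" using orth_contr[OF VV, of x] tau0 by (simp add: y_def mult_left_mono)
    finally show ?thesis .
  qed
  define t where "t = (\<lambda>i. if norm (column i Q - column i A0) \<le> r then 1 else r / norm (column i Q - column i A0))"
  have t01: "0 \<le> t i \<and> t i \<le> 1" for i using r0 by (auto simp: t_def divide_le_eq_1)
  have ct: "c i = column i A0 + t i *\<^sub>R (column i Q - column i A0)" for i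
    by (simp add: c_def t_def)
  have Aent: "Ahat $ a $ b = A0 $ a $ b + t b * (Q $ a $ b - A0 $ a $ b)" for a b
  proof -
    have "Ahat $ a $ b = column b Ahat $ a" by (simp add: column_def)
    also have "\<dots> = A0 $ a $ b + t b * (Q $ a $ b - A0 $ a $ b)"
      by (simp only: colA ct) (simp add: column_def)
    finally show ?thesis .
  qed
  have part3: "spec_norm Ahat \<le> 3 * tau"
  proof -
    have "spec_norm Ahat \<le> 2 * tau"
    proof (rule spec_le)
      fix x
      define y where "y = (\<chi> i. (1 - t i) * x $ i)"
      define z where "z = (\<chi> i. t i * x $ i)"
      have "Ahat *v x = A0 *v y + Q *v z"
        by (simp add: vec_eq_iff matrix_vector_mult_def Aent y_def z_def sum.distrib[symmetric] algebra_simps)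
      hence "norm (Ahat *v x) \<le> norm (A0 *v y) + norm (Q *v z)" by (simp add: norm_triangle_ineq)
      also have "\<dots> \<le> tau * norm y + tau * norm z"
        using spec_bound[of A0 y] assms(8) Qspec[of z]
        by (smt (verit) mult_right_mono norm_ge_zero)
      also have "norm y \<le> norm x"
        by (rule norm_le_componentwise_cart) (use t01 in \<open>auto simp: y_def abs_mult intro: mult_left_le_one_le\<close>)
      also have "norm z \<le> norm x"
        by (rule norm_le_componentwise_cart) (use t01 in \<open>auto simp: z_def abs_mult intro: mult_left_le_one_le\<close>)
      finally show "norm (Ahat *v x) \<le> 2 * tau * norm x" using tau0 by (simp add: mult_left_mono)
    qed
    thus ?thesis using tau0 by linarith
  qed
  show ?thesis using part1 part2 part3 by blast
qed

end
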